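(* There is no computable probability measure $\xi$ on $2^\omega$ such that for every computable $c\in[0,1]$ we have $\mathsf{MLR}_\xi\cap\mathsf{MLR}_{\mu_c}\neq\emptyset$. (In the paper's words: there is no computable mixture of Bernoulli measures that includes all computable Bernoulli measures.)
   Context: For $p\in[0,1]$ the Bernoulli measure $\mu_p$ on $2^\omega$ is determined by $\mu_p(\llbracket\sigma\rrbracket)=p^{\#_0(\sigma)}(1-p)^{\#_1(\sigma)}$, where $\#_i(\sigma)$ is the number of occurrences of $i$ in $\sigma$. For computable $\mu$, $\mathsf{MLR}_\mu$ denotes the set of $\mu$-Martin-Löf random sequences. *)

theory Defs
  imports "HOL-Probability.Probability" "HOL-Library.Nat_Bijection"
begin

datatype recf = Zero | Succ | Proj nat | Comp recf "recf list" | Prim recf recf | Mn recf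

inductive reval :: "recf \<Rightarrow> nat list \<Rightarrow> nat \<Rightarrow> bool" where
  zero: "reval Zero xs 0"
| succ: "reval Succ (x # xs) (Suc x)"
| proj: "i < length xs \<Longrightarrow> reval (Proj i) xs (xs ! i)"
| comp: "length ys = length gs \<Longrightarrow> (\<forall>i < length gs. reval (gs ! i) xs (ys ! i))
          \<Longrightarrow> reval f ys z \<Longrightarrow> reval (Comp f gs) xs z"
| prim0: "reval f xs y \<Longrightarrow> reval (Prim f g) (0 # xs) y"
| primS: "reval (Prim f g) (n # xs) y \<Longrightarrow> reval g (n # y # xs) z
          \<Longrightarrow> reval (Prim f g) (Suc n # xs) z"
| mn: "reval f (n # xs) 0 \<Longrightarrow> (\<forall>m < n. \<exists>y. reval f (m # xs) (Suc y))
          \<Longrightarrow> reval (Mn f) xs n"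

definition computable1 :: "(nat \<Rightarrow> nat) \<Rightarrow> bool" where
  "computable1 f \<longleftrightarrow> (\<exists>r. \<forall>n. reval r [n] (f n))"

definition computable2 :: "(nat \<Rightarrow> nat \<Rightarrow> nat) \<Rightarrow> bool" where
  "computable2 f \<longleftrightarrow> (\<exists>r. \<forall>m n. reval r [m, n] (f m n))"

definition ce_set :: "nat set \<Rightarrow> bool" where
  "ce_set S \<longleftrightarrow> (\<exists>r. \<forall>x. x \<in> S \<longleftrightarrow> (\<exists>y. reval r [x] y))"

text \<open>Binary strings are bool lists; True = bit 1, False = bit 0.\<close>
definition code :: "bool list \<Rightarrow> nat" where
  "code \<sigma> = list_encode (map of_bool \<sigma>)"

definition cyl :: "bool list \<Rightarrow> (nat \<Rightarrow> bool) set" where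
  "cyl \<sigma> = {X. \<forall>i < length \<sigma>. X i = \<sigma> ! i}"

definition cantor :: "(nat \<Rightarrow> bool) measure" where
  "cantor = PiM UNIV (\<lambda>_. count_space UNIV)"

definition rat_approx :: "nat \<Rightarrow> nat \<Rightarrow> real" where
  "rat_approx a b = real_of_int (int_decode a) / real (Suc b)"

definition computable_real :: "real \<Rightarrow> bool" where
  "computable_real x \<longleftrightarrow> (\<exists>a b. computable1 a \<and> computable1 b \<and>
      (\<forall>n. \<bar>x - rat_approx (a n) (b n)\<bar> \<le> 1 / 2 ^ n))"

definition computable_measure :: "(nat \<Rightarrow> bool) measure \<Rightarrow> bool" where
  "computable_measure M \<longleftrightarrow> (\<exists>a b. computable2 a \<and> computable2 b \<and>
      (\<forall>\<sigma> n. \<bar>measure M (cyl \<sigma>) - rat_approx (a (code \<sigma>) n) (b (code \<sigma>) n)\<bar> \<le> 1 / 2 ^ n))"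

text \<open>Bernoulli measure: each bit independently is 0 with probability p.\<close>
definition bernoulli_measure :: "real \<Rightarrow> (nat \<Rightarrow> bool) measure" where
  "bernoulli_measure p = PiM UNIV (\<lambda>_. measure_pmf (bernoulli_pmf (1 - p)))"

text \<open>A c.e. set W of codes of pairs (n, sigma) describes the uniformly c.e.
  sequence of open sets U_n.\<close>
definition test_level :: "nat set \<Rightarrow> nat \<Rightarrow> (nat \<Rightarrow> bool) set" where
  "test_level W n = (\<Union>\<sigma> \<in> {\<sigma>. prod_encode (n, code \<sigma>) \<in> W}. cyl \<sigma>)"

definition martin_loef_test :: "(nat \<Rightarrow> bool) measure \<Rightarrow> nat set \<Rightarrow> bool" where
  "martin_loef_test M W \<longleftrightarrow> ce_set W \<and> (\<forall>n. emeasure M (test_level W n) \<le> ennreal (1 / 2 ^ n))"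

definition MLR :: "(nat \<Rightarrow> bool) measure \<Rightarrow> (nat \<Rightarrow> bool) set" where
  "MLR M = {X. \<forall>W. martin_loef_test M W \<longrightarrow> X \<notin> (\<Inter>n. test_level W n)}"

end

theory Submission
  imports Defs
begin


definition tc :: "nat \<Rightarrow> ((nat \<Rightarrow> nat) \<Rightarrow> nat) \<Rightarrow> bool" where
  "tc n F \<longleftrightarrow> (\<exists>r. \<forall>e. reval r (map e [0..<n]) (F e))"

lemma tc_const: "tc n (\<lambda>e. c)"
proof (induction c)
  case 0
  then show ?case unfolding tc_def by (auto intro: reval.zero)
next
  case (Suc c)
  then obtain r where r: "\<forall>e. reval r (map e [0..<n]) c" unfolding tc_def by auto
  have "reval (Comp Succ [r]) (map e [0..<n]) (Suc c)" for e
    by (rule reval.comp[of "[c]"]) (use r in \<open>auto intro: reval.succ\<close>)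
  then show ?case unfolding tc_def by blast
qed

lemma tc_proj: "i < n \<Longrightarrow> tc n (\<lambda>e. e i)"
  unfolding tc_def
  by (rule exI[of _ "Proj i"]) (auto intro!: reval.proj[of i "map _ [0..<n]", simplified])

lemma tc_comp:
  assumes "tc m F" "\<And>i. i < m \<Longrightarrow> tc n (G i)"
  shows "tc n (\<lambda>e. F (\<lambda>i. G i e))"
proof -
  obtain r where r: "\<forall>e. reval r (map e [0..<m]) (F e)" using assms(1) unfolding tc_def by auto
  have "\<forall>i<m. \<exists>s. \<forall>e. reval s (map e [0..<n]) (G i e)" using assms(2) unfolding tc_def by auto
  then obtain s where s: "\<forall>i<m. \<forall>e. reval (s i) (map e [0..<n]) (G i e)" by metis
  have "reval (Comp r (map s [0..<m])) (map e [0..<n]) (F (\<lambda>i. G i e))" for e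
  proof (rule reval.comp[of "map (\<lambda>i. G i e) [0..<m]"])
    show "reval r (map (\<lambda>i. G i e) [0..<m]) (F (\<lambda>i. G i e))" using r by blast
  qed (use s in auto)
  then show ?thesis unfolding tc_def by blast
qed

lemma tc_succ1: "tc 1 (\<lambda>e. Suc (e 0))"
  unfolding tc_def by (rule exI[of _ Succ]) (auto intro: reval.succ)

lemma tc_Suc: "tc n f \<Longrightarrow> tc n (\<lambda>e. Suc (f e))"
  using tc_comp[OF tc_succ1, of n "\<lambda>i. f"] by simp

lemma tc_prim0:
  assumes "tc n F" "tc (Suc (Suc n)) (\<lambda>e. G (e 0) (e 1) (\<lambda>i. e (Suc (Suc i))))"
  shows "tc (Suc n) (\<lambda>e. rec_nat (F (\<lambda>i. e (Suc i))) (\<lambda>k acc. G k acc (\<lambda>i. e (Suc i))) (e 0))"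
proof -
  obtain f where f: "\<forall>e. reval f (map e [0..<n]) (F e)" using assms(1) unfolding tc_def by auto
  obtain g where g: "\<forall>e. reval g (map e [0..<Suc (Suc n)]) (G (e 0) (e 1) (\<lambda>i. e (Suc (Suc i))))"
    using assms(2) unfolding tc_def by auto
  have mp: "map e [0..<Suc m] = e 0 # map (\<lambda>i. e (Suc i)) [0..<m]" for e :: "nat \<Rightarrow> nat" and m
    by (induction m) auto
  have "reval (Prim f g) (k # map e [0..<n]) (rec_nat (F e) (\<lambda>k acc. G k acc e) k)" for k e
  proof (induction k)
    case 0
    then show ?case using f by (auto intro: reval.prim0)
  next
    case (Suc k)
    have "reval g (k # rec_nat (F e) (\<lambda>k acc. G k acc e) k # map e [0..<n])
          (G k (rec_nat (F e) (\<lambda>k acc. G k acc e) k) e)"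
      using g[rule_format, of "\<lambda>i. if i = 0 then k else if i = 1 then rec_nat (F e) (\<lambda>k acc. G k acc e) k else e (i - 2)"]
      by (simp add: mp del: upt_Suc)
    then show ?case using Suc by (auto intro: reval.primS)
  qed
  then have "reval (Prim f g) (map e [0..<Suc n]) (rec_nat (F (\<lambda>i. e (Suc i))) (\<lambda>k acc. G k acc (\<lambda>i. e (Suc i))) (e 0))" for e
    by (simp add: mp del: upt_Suc)
  then show ?thesis unfolding tc_def by blast
qed



named_theorems tci

lemma tc_cong: "tc n f \<Longrightarrow> (\<And>e. f e = g e) \<Longrightarrow> tc n g"
  unfolding tc_def by (metis)

lemma tc_rec:
  assumes "tc n T" "tc n F" "tc (Suc (Suc n)) (\<lambda>e. G (e 0) (e 1) (\<lambda>i. e (Suc (Suc i))))"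
  shows "tc n (\<lambda>e. rec_nat (F e) (\<lambda>k acc. G k acc e) (T e))"
proof -
  have "tc n (\<lambda>e. (\<lambda>e'. rec_nat (F (\<lambda>i. e' (Suc i))) (\<lambda>k acc. G k acc (\<lambda>i. e' (Suc i))) (e' 0))
          (\<lambda>i. (if i = 0 then T else (\<lambda>e. e (i - 1))) e))"
    by (rule tc_comp[OF tc_prim0[OF assms(2,3)]]) (auto intro: assms(1) tc_proj)
  then show ?thesis by simp
qed

lemma tc_reindex:
  assumes "tc m F" "\<And>i. i < m \<Longrightarrow> s i < n"
  shows "tc n (\<lambda>e. F (\<lambda>i. e (s i)))"
  using tc_comp[OF assms(1), of n "\<lambda>i e. e (s i)"] assms(2) tc_proj by auto

lemma tc_const'[tci]: "tc n (\<lambda>e. c)" by (rule tc_const)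
lemma tc_proj'[tci]: "i < n \<Longrightarrow> tc n (\<lambda>e. e i)" by (rule tc_proj)
lemma tc_Suc'[tci]: "tc n f \<Longrightarrow> tc n (\<lambda>e. Suc (f e))" by (rule tc_Suc)

lemma tc_rec'[tci]:
  "tc n T \<Longrightarrow> tc n F \<Longrightarrow> tc (Suc (Suc n)) (\<lambda>e. G (e 0) (e 1) (\<lambda>i. e (Suc (Suc i))))
   \<Longrightarrow> tc n (\<lambda>e. rec_nat (F e) (\<lambda>k acc. G k acc e) (T e))"
  by (rule tc_rec)

lemma tc_add[tci]: assumes "tc n f" "tc n g" shows "tc n (\<lambda>e. f e + g e)"
proof -
  have "tc n (\<lambda>e. rec_nat (f e) (\<lambda>k acc. Suc acc) (g e))"
    by (intro tc_rec' assms tc_Suc' tc_proj') simp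
  moreover have "rec_nat x (\<lambda>k acc. Suc acc) y = x + y" for x y :: nat by (induction y) auto
  ultimately show ?thesis by simp
qed

lemma tc_pred: assumes "tc n f" shows "tc n (\<lambda>e. f e - 1)"
proof -
  have "tc n (\<lambda>e. rec_nat 0 (\<lambda>k acc. k) (f e))"
    by (intro tc_rec' assms tc_const' tc_proj') simp
  moreover have "rec_nat 0 (\<lambda>k acc. k) y = y - 1" for y :: nat by (induction y) auto
  ultimately show ?thesis by simp
qed

lemma tc_minus[tci]: assumes "tc n f" "tc n g" shows "tc n (\<lambda>e. f e - g e)"
proof -
  have "tc n (\<lambda>e. rec_nat (f e) (\<lambda>k acc. acc - 1) (g e))"
    by (intro tc_rec' assms tc_pred tc_proj') simp
  moreover have "rec_nat x (\<lambda>k acc. acc - 1) y = x - y" for x y :: nat by (induction y) auto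
  ultimately show ?thesis by simp
qed

lemma tc_mult[tci]: assumes "tc n f" "tc n g" shows "tc n (\<lambda>e. f e * g e)"
proof -
  have "tc n (\<lambda>e. rec_nat 0 (\<lambda>k acc. acc + f e) (g e))"
    by (intro tc_rec' assms tc_const' tc_add tc_proj' tc_reindex[OF assms(1), where s="\<lambda>i. Suc (Suc i)", simplified]) simp_all
  moreover have "rec_nat 0 (\<lambda>k acc. acc + x) y = x * y" for x y :: nat by (induction y) auto
  ultimately show ?thesis by simp
qed

lemma tc_ifz: assumes "tc n f" "tc n g" "tc n h" shows "tc n (\<lambda>e. if f e = 0 then g e else h e)"
proof -
  have "tc n (\<lambda>e. rec_nat (g e) (\<lambda>k acc. h e) (f e))"
    by (intro tc_rec' assms tc_reindex[OF assms(3), where s="\<lambda>i. Suc (Suc i)", simplified]) simp_all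
  moreover have "rec_nat x (\<lambda>k acc. z) y = (if y = 0 then x else z)" for x y z :: nat by (cases y) auto
  ultimately show ?thesis by simp
qed

lemma tc_pow[tci]: assumes "tc n f" "tc n g" shows "tc n (\<lambda>e. f e ^ g e)"
proof -
  have "tc n (\<lambda>e. rec_nat 1 (\<lambda>k acc. acc * f e) (g e))"
    by (intro tc_rec' assms tc_const' tc_mult tc_proj' tc_reindex[OF assms(1), where s="\<lambda>i. Suc (Suc i)", simplified]) simp_all
  moreover have "rec_nat 1 (\<lambda>k acc. acc * x) y = x ^ y" for x y :: nat by (induction y) auto
  ultimately show ?thesis by simp
qed

lemma tc_sum[tci]:
  assumes "tc n T" "tc (Suc n) (\<lambda>e. f (e 0) (\<lambda>i. e (Suc i)))"
  shows "tc n (\<lambda>e. \<Sum>i<T e. f i e)"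
proof -
  have "tc (Suc (Suc n)) (\<lambda>e. (\<lambda>e'. f (e' 0) (\<lambda>i. e' (Suc i))) (\<lambda>i. e (if i = 0 then 0 else Suc i)))"
    by (rule tc_reindex[OF assms(2)]) auto
  then have "tc (Suc (Suc n)) (\<lambda>e. f (e 0) (\<lambda>i. e (Suc (Suc i))))" by simp
  then have "tc n (\<lambda>e. rec_nat 0 (\<lambda>k acc. acc + f k e) (T e))"
    by (intro tc_rec' assms tc_const' tc_add tc_proj') simp_all
  moreover have "rec_nat 0 (\<lambda>k acc. acc + f k e) y = (\<Sum>i<y. f i e)" for y e by (induction y) auto
  ultimately show ?thesis by simp
qed

definition tp :: "nat \<Rightarrow> ((nat \<Rightarrow> nat) \<Rightarrow> bool) \<Rightarrow> bool" where
  "tp n P \<longleftrightarrow> tc n (\<lambda>e. of_bool (P e))"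

lemma tc_if[tci]: assumes "tp n P" "tc n f" "tc n g" shows "tc n (\<lambda>e. if P e then f e else g e)"
proof -
  have "tc n (\<lambda>e. if of_bool (P e) = (0::nat) then g e else f e)"
    using assms unfolding tp_def by (intro tc_ifz)
  then show ?thesis by (smt (verit) of_bool_eq(1) of_bool_eq_0_iff tc_def)
qed

lemma tp_le[tci]: assumes "tc n f" "tc n g" shows "tp n (\<lambda>e. f e \<le> g e)"
proof -
  have "tc n (\<lambda>e. if f e - g e = 0 then 1 else 0)" by (intro tc_ifz tc_minus assms tc_const')
  then show ?thesis unfolding tp_def by (simp add: of_bool_def)
qed

lemma tp_less[tci]: assumes "tc n f" "tc n g" shows "tp n (\<lambda>e. f e < g e)"
  using tp_le[OF tc_Suc[OF assms(1)] assms(2)] by (simp add: Suc_le_eq)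

lemma tp_cong: "tp n P \<Longrightarrow> (\<And>e. P e = Q e) \<Longrightarrow> tp n Q"
  unfolding tp_def by (erule tc_cong) simp

lemma tp_conj[tci]: assumes "tp n P" "tp n Q" shows "tp n (\<lambda>e. P e \<and> Q e)"
  using tc_mult[OF assms[unfolded tp_def]] unfolding tp_def by (rule tc_cong) simp

lemma tp_not[tci]: assumes "tp n P" shows "tp n (\<lambda>e. \<not> P e)"
  using tc_minus[OF tc_const assms[unfolded tp_def], of 1] unfolding tp_def by (rule tc_cong) simp

lemma tp_disj[tci]: assumes "tp n P" "tp n Q" shows "tp n (\<lambda>e. P e \<or> Q e)"
  using tp_not[OF tp_conj[OF tp_not[OF assms(1)] tp_not[OF assms(2)]]] by simp

lemma tp_eq[tci]: assumes "tc n f" "tc n g" shows "tp n (\<lambda>e. f e = g e)"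
  using tp_conj[OF tp_le[OF assms] tp_le[OF assms(2,1)]] by (simp add: order_eq_iff)

lemma tp_true[tci]: "tp n (\<lambda>e. True)" unfolding tp_def by (simp add: tc_const)

lemma tp_bex[tci]:
  assumes "tc n T" "tp (Suc n) (\<lambda>e. P (e 0) (\<lambda>i. e (Suc i)))"
  shows "tp n (\<lambda>e. \<exists>i<T e. P i e)"
proof -
  have "tp n (\<lambda>e. (\<Sum>i<T e. of_bool (P i e)) \<noteq> (0::nat))"
    by (intro tp_not tp_eq tc_sum assms tc_const') (use assms(2) in \<open>simp add: tp_def\<close>)
  then show ?thesis by (rule tp_cong) (auto simp: sum_nonneg_eq_0_iff)
qed

lemma div_aux: "Suc i * y \<le> x \<Longrightarrow> 0 < y \<Longrightarrow> i < (x::nat)"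
proof -
  assume a: "Suc i * y \<le> x" "0 < y"
  have "Suc i * 1 \<le> Suc i * y" using a(2) by (intro mult_le_mono2) simp
  then have "Suc i \<le> x" using a(1) by simp
  then show ?thesis by simp
qed

lemma tc_div[tci]: assumes "tc n f" "tc n g" shows "tc n (\<lambda>e. f e div g e)"
proof -
  have key: "(if y = 0 then 0 else \<Sum>i<x. of_bool (Suc i * y \<le> x)) = x div y" for x y :: nat
  proof (cases "y = 0")
    case False
    have "{i. i < x \<and> Suc i * y \<le> x} = {..<x div y}"
    proof (intro set_eqI iffI)
      fix i assume "i \<in> {i. i < x \<and> Suc i * y \<le> x}"
      then have "Suc i \<le> x div y" using False by (simp add: less_eq_div_iff_mult_less_eq)
      then show "i \<in> {..<x div y}" by simp
    next
      fix i assume "i \<in> {..<x div y}"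
      then have "Suc i \<le> x div y" by simp
      then show "i \<in> {i. i < x \<and> Suc i * y \<le> x}" using False div_le_dividend[of x y]
        by (auto simp: less_eq_div_iff_mult_less_eq simp del: mult_Suc)
          (rule div_aux)
    qed
    then have "(\<Sum>i<x. of_bool (Suc i * y \<le> x)::nat) = x div y"
      by (simp add: sum.If_cases Int_def flip: lessThan_def)
    then show ?thesis using False by simp
  qed simp
  have "tc n (\<lambda>e. if g e = 0 then 0 else \<Sum>i<f e. of_bool (Suc i * g e \<le> f e))"
    by (intro tci assms tc_reindex[OF assms(1), where s=Suc, simplified] tc_reindex[OF assms(2), where s=Suc, simplified]
        | simp add: tp_def[symmetric])+
  then show ?thesis by (simp only: key)
qed

lemma tc_mod[tci]: assumes "tc n f" "tc n g" shows "tc n (\<lambda>e. f e mod g e)"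
  using tc_minus[OF assms(1) tc_mult[OF assms(2) tc_div[OF assms]]] by (simp add: minus_mult_div_eq_mod)

lemma tp_even[tci]: assumes "tc n f" shows "tp n (\<lambda>e. even (f e))"
  using tp_eq[OF tc_mod[OF assms tc_const[of n 2]] tc_const[of n 0]] by (simp add: even_iff_mod_2_eq_zero)

lemma tc_triangle[tci]: assumes "tc n f" shows "tc n (\<lambda>e. triangle (f e))"
proof -
  have "tc n (\<lambda>e. rec_nat 0 (\<lambda>k acc. acc + Suc k) (f e))"
    by (intro tci assms) simp_all
  moreover have "rec_nat 0 (\<lambda>k acc. acc + Suc k) y = triangle y" for y by (induction y) auto
  ultimately show ?thesis by simp
qed

lemma tc_prod_encode[tci]: assumes "tc n f" "tc n g" shows "tc n (\<lambda>e. prod_encode (f e, g e))"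
  unfolding prod_encode_def by (simp, intro tci assms)



primrec bits :: "nat \<Rightarrow> nat \<Rightarrow> bool list" where
  "bits 0 s = []"
| "bits (Suc N) s = odd s # bits N (s div 2)"

lemma length_bits[simp]: "length (bits N s) = N"
  by (induction N arbitrary: s) auto

lemma bits_nth: "i < N \<Longrightarrow> bits N s ! i = odd (s div 2 ^ i)"
proof (induction N arbitrary: s i)
  case (Suc N)
  then show ?case by (cases i) (auto simp: div_mult2_eq)
qed simp

lemma bits_inj: "s < 2 ^ N \<Longrightarrow> t < 2 ^ N \<Longrightarrow> bits N s = bits N t \<Longrightarrow> s = t"
proof (induction N arbitrary: s t)
  case 0 then show ?case by simp
next
  case (Suc N)
  have "s div 2 = t div 2" using Suc by (auto simp: less_mult_imp_div_less)
  moreover have "odd s = odd t" using Suc.prems by simp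
  ultimately show ?case by (metis div_mult_mod_eq odd_iff_mod_2_eq_one parity_cases)
qed

lemma bits_surj: "\<exists>s < 2 ^ N. bits N s = map X [0..<N]"
proof (induction N arbitrary: X)
  case 0 then show ?case by simp
next
  case (Suc N)
  obtain t where t: "t < 2 ^ N" "bits N t = map (\<lambda>i. X (Suc i)) [0..<N]" using Suc by blast
  define s where "s = of_bool (X 0) + 2 * t"
  have "s < 2 ^ Suc N" using t(1) unfolding s_def by auto
  moreover have "bits (Suc N) s = map X [0..<Suc N]"
    using t(2) unfolding s_def by (simp add: map_upt_Suc del: upt_Suc)
  ultimately show ?case by blast
qed

definition cr :: "nat \<Rightarrow> nat \<Rightarrow> nat" where
  "cr N s = rec_nat 0 (\<lambda>i acc. Suc (prod_encode (s div 2 ^ (N - Suc i) mod 2, acc))) N"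

lemma cr_aux: "i \<le> N \<Longrightarrow> rec_nat 0 (\<lambda>i acc. Suc (prod_encode (s div 2 ^ (N - Suc i) mod 2, acc))) i
   = code (bits i (s div 2 ^ (N - i)))"
proof (induction i)
  case 0 then show ?case by (simp add: code_def)
next
  case (Suc i)
  have e: "s div 2 ^ (N - Suc i) div 2 = s div 2 ^ (N - i)"
  proof -
    have "N - i = Suc (N - Suc i)" using Suc.prems by simp
    then show ?thesis by (simp only: power_Suc div_mult2_eq) (metis div_mult2_eq mult.commute)
  qed
  have "of_bool (odd (s div 2 ^ (N - Suc i))) = s div 2 ^ (N - Suc i) mod (2::nat)"
    by (simp add: odd_iff_mod_2_eq_one)
  then show ?case using Suc by (simp add: code_def e)
qed

lemma cr_code: "cr N s = code (bits N s)"
  unfolding cr_def using cr_aux[of N N s] by simp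

lemma code_inj: "code x = code y \<Longrightarrow> x = y"
proof -
  assume "code x = code y"
  then have "map of_bool x = (map of_bool y :: nat list)" unfolding code_def by (simp add: list_encode_eq)
  then show "x = y" by (rule map_injective) (auto simp: inj_on_def)
qed

definition zc :: "nat \<Rightarrow> nat \<Rightarrow> nat" where
  "zc N s = (\<Sum>i<N. 1 - s div 2 ^ i mod 2)"

primrec nz :: "bool list \<Rightarrow> nat" where
  "nz [] = 0"
| "nz (b # xs) = (if b then 0 else 1) + nz xs"

lemma zc_bits: "zc N s = nz (bits N s)"
proof (induction N arbitrary: s)
  case 0 then show ?case by (simp add: zc_def)
next
  case (Suc N)
  have "zc (Suc N) s = (1 - s mod 2) + zc N (s div 2)"
    unfolding zc_def by (simp add: sum.lessThan_Suc_shift div_mult2_eq del: sum.lessThan_Suc)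
  then show ?case using Suc by (simp add: odd_iff_mod_2_eq_one)
qed

lemma sum_pow2_split: "(\<Sum>s<2 ^ Suc N. g (bits (Suc N) s)) = (\<Sum>t<2 ^ N. g (False # bits N t) + g (True # bits N t))"
proof -
  have "(\<Sum>s<2 * M. f s) = (\<Sum>t<M. f (2 * t) + f (Suc (2 * t)))" for M and f :: "nat \<Rightarrow> 'a::comm_monoid_add"
    by (induction M) (auto simp: add_ac)
  from this[of "\<lambda>s. g (bits (Suc N) s)" "2^N"] show ?thesis by (simp add: mult.commute)
qed

lemma cyl_bits_disj: "s < 2 ^ N \<Longrightarrow> t < 2 ^ N \<Longrightarrow> s \<noteq> t \<Longrightarrow> cyl (bits N s) \<inter> cyl (bits N t) = {}"
proof -
  assume a: "s < 2 ^ N" "t < 2 ^ N" "s \<noteq> t"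
  then have "bits N s \<noteq> bits N t" using bits_inj by blast
  then obtain i where "i < N" "bits N s ! i \<noteq> bits N t ! i" using nth_equalityI[of "bits N s" "bits N t"] by auto
  then show ?thesis unfolding cyl_def by auto
qed

lemma cyl_bits_cover: "\<exists>s < 2 ^ N. X \<in> cyl (bits N s)"
proof -
  obtain s where "s < 2 ^ N" "bits N s = map X [0..<N]" using bits_surj by blast
  then show ?thesis unfolding cyl_def by auto
qed

lemma cyl_bits_unique: "s < 2 ^ N \<Longrightarrow> t < 2 ^ N \<Longrightarrow> X \<in> cyl (bits N s) \<Longrightarrow> X \<in> cyl (bits N t) \<Longrightarrow> s = t"
  using cyl_bits_disj by blast



lemma reval_det: "reval r xs y \<Longrightarrow> reval r xs y' \<Longrightarrow> y = y'"
proof (induct arbitrary: y' rule: reval.induct)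
  case (zero xs) then show ?case by (cases rule: reval.cases) auto
next
  case (succ x xs) then show ?case by (cases rule: reval.cases) auto
next
  case (proj i xs) from proj.prems show ?case by (cases rule: reval.cases) auto
next
  case (comp ys gs xs f z)
  from comp.prems show ?case
  proof (cases rule: reval.cases)
    case (comp ys')
    have "ys' = ys" using comp comp.hyps(1,2) by (intro nth_equalityI) auto
    then show ?thesis using comp comp.hyps(4) by auto
  qed
next
  case (prim0 f xs y g) from prim0.prems show ?case by (cases rule: reval.cases) (use prim0.hyps in auto)
next
  case (primS f g n xs y z)
  from primS.prems show ?case
  proof (cases rule: reval.cases)
    case (primS y2)
    then have "y2 = y" using primS.hyps(2) by auto
    then show ?thesis using primS primS.hyps(4) by auto
  qed
next
  case (mn f n xs)
  from mn.prems show ?case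
  proof (cases rule: reval.cases)
    case mn
    show ?thesis
    proof (rule ccontr)
      assume "n \<noteq> y'"
      then consider "n < y'" | "y' < n" by linarith
      then show False
      proof cases
        case 1 then obtain v where "reval f (n # xs) (Suc v)" using mn by blast
        then show False using mn.hyps(2) by fastforce
      next
        case 2 then obtain v where "reval f (y' # xs) (Suc v)" "\<forall>y''. reval f (y' # xs) y'' \<longrightarrow> Suc v = y''"
          using mn.hyps(3) by blast
        then show False using mn by fastforce
      qed
    qed
  qed
qed

lemma tc_computable1: "tc 1 (\<lambda>e. f (e 0)) \<Longrightarrow> computable1 f"
proof -
  assume "tc 1 (\<lambda>e. f (e 0))"
  then obtain r where r: "\<forall>e. reval r (map e [0..<1]) (f (e 0))" unfolding tc_def by auto
  have "reval r [n] (f n)" for n using r[rule_format, of "\<lambda>_. n"] by simp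
  then show ?thesis unfolding computable1_def by blast
qed

lemma computable2_tc: assumes "computable2 a" shows "tc 2 (\<lambda>e. a (e 0) (e 1))"
proof -
  obtain r where r: "\<forall>m n. reval r [m, n] (a m n)" using assms unfolding computable2_def by auto
  have "map e [0..<2] = [e 0, e 1]" for e :: "nat \<Rightarrow> nat" by (simp add: upt_rec)
  then show ?thesis unfolding tc_def using r by metis
qed

lemma tc_ce:
  assumes "tp 2 (\<lambda>e. Q (e 0) (e 1))"
  shows "ce_set {x. \<exists>j. Q j x}"
proof -
  have "tc 2 (\<lambda>e. if Q (e 0) (e 1) then 0 else 1)" by (intro tc_if assms tc_const)
  then obtain f where f: "\<forall>e. reval f (map e [0..<2]) (if Q (e 0) (e 1) then 0 else 1)" unfolding tc_def by auto
  have mp: "map e [0..<2] = [e 0, e 1]" for e :: "nat \<Rightarrow> nat" by (simp add: upt_rec)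
  have f2: "reval f [j, x] (if Q j x then 0 else 1)" for j x
    using f[rule_format, of "\<lambda>i. if i = 0 then j else x"] by (simp add: mp)
  have "x \<in> {x. \<exists>j. Q j x} \<longleftrightarrow> (\<exists>y. reval (Mn f) [x] y)" for x
  proof
    assume "x \<in> {x. \<exists>j. Q j x}"
    then have ex: "\<exists>j. Q j x" by simp
    define j where "j = (LEAST j. Q j x)"
    have "Q j x" unfolding j_def using ex by (rule LeastI_ex)
    moreover have "\<forall>m<j. \<not> Q m x" unfolding j_def using not_less_Least by blast
    ultimately have "reval (Mn f) [x] j"
    proof (intro reval.mn allI impI)
      show "reval f [j, x] 0" using f2[of j x] \<open>Q j x\<close> by simp
      fix m assume "m < j"
      then have "reval f [m, x] (Suc 0)" using f2[of m x] \<open>\<forall>m<j. \<not> Q m x\<close> by simp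
      then show "\<exists>y. reval f (m # [x]) (Suc y)" by blast
    qed
    then show "\<exists>y. reval (Mn f) [x] y" by blast
  next
    assume "\<exists>y. reval (Mn f) [x] y"
    then obtain y where "reval (Mn f) [x] y" by blast
    then have "reval f [y, x] 0" by (cases rule: reval.cases) auto
    then have "(if Q y x then 0 else 1) = (0::nat)" using f2[of y x] reval_det by blast
    then have "Q y x" by (cases "Q y x") auto
    then show "x \<in> {x. \<exists>j. Q j x}" by blast
  qed
  then show ?thesis unfolding ce_set_def by blast
qed



definition ee :: "nat \<Rightarrow> nat" where "ee k = rec_nat 0 (\<lambda>i acc. acc + i + 5) k"
definition NN :: "nat \<Rightarrow> nat" where "NN k = 2 ^ (2 * ee (Suc k) + k + 3)"
definition pr :: "nat \<Rightarrow> nat" where "pr k = NN k + k + 8"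
definition qv :: "(nat \<Rightarrow> nat \<Rightarrow> nat) \<Rightarrow> (nat \<Rightarrow> nat \<Rightarrow> nat) \<Rightarrow> nat \<Rightarrow> nat \<Rightarrow> nat" where
  "qv a b x n = (if even (a x n) then a x n div 2 * 2 ^ n div (b x n + 1) else 0)"
definition good :: "nat \<Rightarrow> nat \<Rightarrow> nat \<Rightarrow> bool" where
  "good k L s \<longleftrightarrow> L * NN k \<le> zc (NN k) s * 2 ^ ee (Suc k) + NN k \<and> zc (NN k) s * 2 ^ ee (Suc k) \<le> (L + 2) * NN k"
definition AA :: "(nat \<Rightarrow> nat \<Rightarrow> nat) \<Rightarrow> (nat \<Rightarrow> nat \<Rightarrow> nat) \<Rightarrow> nat \<Rightarrow> nat \<Rightarrow> nat" where
  "AA a b k L = (\<Sum>s<2 ^ NN k. if good k L s then qv a b (cr (NN k) s) (pr k) else 0)"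
definition am :: "(nat \<Rightarrow> nat \<Rightarrow> nat) \<Rightarrow> (nat \<Rightarrow> nat \<Rightarrow> nat) \<Rightarrow> nat \<Rightarrow> nat \<Rightarrow> nat" where
  "am a b k p = rec_nat 0 (\<lambda>i acc. if AA a b k (p * 2 ^ (k + 5) + Suc i) < AA a b k (p * 2 ^ (k + 5) + acc) then Suc i else acc) (2 ^ (k + 5) - 1)"
definition PP :: "(nat \<Rightarrow> nat \<Rightarrow> nat) \<Rightarrow> (nat \<Rightarrow> nat \<Rightarrow> nat) \<Rightarrow> nat \<Rightarrow> nat" where
  "PP a b k = rec_nat 0 (\<lambda>i acc. acc * 2 ^ (i + 5) + am a b i acc) k"

definition Wx :: "(nat \<Rightarrow> nat \<Rightarrow> nat) \<Rightarrow> (nat \<Rightarrow> nat \<Rightarrow> nat) \<Rightarrow> nat set" where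
  "Wx a b = {x. \<exists>j. \<exists>m<Suc j. \<exists>k<Suc j. \<exists>s<Suc j. x = prod_encode (m, cr (NN k) s) \<and> m \<le> k \<and> s < 2 ^ NN k \<and> good k (PP a b (Suc k)) s}"
definition Wc :: "(nat \<Rightarrow> nat \<Rightarrow> nat) \<Rightarrow> (nat \<Rightarrow> nat \<Rightarrow> nat) \<Rightarrow> nat set" where
  "Wc a b = {x. \<exists>j. \<exists>m<Suc j. \<exists>k<Suc j. \<exists>s<Suc j. x = prod_encode (m, cr (NN k) s) \<and> m \<le> k \<and> s < 2 ^ NN k \<and> \<not> good k (PP a b (Suc k)) s}"

lemma tc_ee[tci]: "tc n f \<Longrightarrow> tc n (\<lambda>e. ee (f e))"
  unfolding ee_def by (intro tci) simp_all

lemma tc_NN[tci]: "tc n f \<Longrightarrow> tc n (\<lambda>e. NN (f e))"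
  unfolding NN_def by (intro tci) simp_all

lemma tc_cr[tci]: "tc n f \<Longrightarrow> tc n g \<Longrightarrow> tc n (\<lambda>e. cr (f e) (g e))"
  unfolding cr_def by (intro tci tc_reindex[where s="\<lambda>i. Suc (Suc i)"]) simp_all

lemma tc_zc[tci]: "tc n f \<Longrightarrow> tc n g \<Longrightarrow> tc n (\<lambda>e. zc (f e) (g e))"
  unfolding zc_def by (intro tci tc_reindex[where s=Suc]) simp_all

lemma tp_good[tci]: "tc n f \<Longrightarrow> tc n g \<Longrightarrow> tc n h \<Longrightarrow> tp n (\<lambda>e. good (f e) (g e) (h e))"
  unfolding good_def by (intro tci) simp_all

context
  fixes a b :: "nat \<Rightarrow> nat \<Rightarrow> nat"
  assumes ca: "computable2 a" and cb: "computable2 b"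
begin

lemma tc_a[tci]: "tc n f \<Longrightarrow> tc n g \<Longrightarrow> tc n (\<lambda>e. a (f e) (g e))"
  using tc_comp[OF computable2_tc[OF ca], of n "\<lambda>i. if i = 0 then f else g"] by simp
lemma tc_b[tci]: "tc n f \<Longrightarrow> tc n g \<Longrightarrow> tc n (\<lambda>e. b (f e) (g e))"
  using tc_comp[OF computable2_tc[OF cb], of n "\<lambda>i. if i = 0 then f else g"] by simp

lemma tc_AA[tci]: "tc n f \<Longrightarrow> tc n g \<Longrightarrow> tc n (\<lambda>e. AA a b (f e) (g e))"
  unfolding AA_def qv_def pr_def by (intro tci tc_reindex[where s=Suc]) simp_all

lemma tc_am[tci]: "tc n f \<Longrightarrow> tc n g \<Longrightarrow> tc n (\<lambda>e. am a b (f e) (g e))"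
  unfolding am_def by (intro tci tc_reindex[where s="\<lambda>i. Suc (Suc i)"]) simp_all

lemma tc_PP[tci]: "tc n f \<Longrightarrow> tc n (\<lambda>e. PP a b (f e))"
  unfolding PP_def by (intro tci) simp_all

lemma ce_Wx: "ce_set (Wx a b)"
  unfolding Wx_def by (rule tc_ce) (intro tci; simp)

lemma ce_Wc: "ce_set (Wc a b)"
  unfolding Wc_def by (rule tc_ce) (intro tci; simp)

lemma comp_PP: "computable1 (\<lambda>n. 2 * PP a b n)"
  by (rule tc_computable1) (intro tci; simp)

end

lemma comp_ee: "computable1 (\<lambda>n. 2 ^ ee n - 1)"
  by (rule tc_computable1) (intro tci; simp)



lemma cyl_sets: "cyl \<sigma> \<in> sets cantor"
proof -
  have "cyl \<sigma> = {X \<in> space cantor. \<forall>i\<in>{..<length \<sigma>}. X i = \<sigma> ! i}"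
    unfolding cyl_def cantor_def by (auto simp: space_PiM)
  also have "\<dots> \<in> sets cantor" unfolding cantor_def by measurable
  finally show ?thesis .
qed

lemma sets_bern: "sets (bernoulli_measure c) = sets cantor"
  unfolding bernoulli_measure_def cantor_def by (rule sets_PiM_cong) auto

primrec wt :: "real \<Rightarrow> bool list \<Rightarrow> real" where
  "wt c [] = 1"
| "wt c (b # xs) = (if b then 1 - c else c) * wt c xs"

lemma wt_prod: "wt c \<sigma> = (\<Prod>i<length \<sigma>. if \<sigma> ! i then 1 - c else c)"
  by (induction \<sigma>) (auto simp: prod.lessThan_Suc_shift simp del: prod.lessThan_Suc)

lemma emeasure_bern_cyl:
  assumes "0 \<le> c" "c \<le> 1"
  shows "emeasure (bernoulli_measure c) (cyl \<sigma>) = ennreal (wt c \<sigma>)"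
proof -
  let ?M = "\<lambda>_::nat. measure_pmf (bernoulli_pmf (1 - c))"
  have "cyl \<sigma> = prod_emb UNIV ?M {..<length \<sigma>} (\<Pi>\<^sub>E i\<in>{..<length \<sigma>}. {\<sigma> ! i})"
  proof (rule set_eqI)
    fix X :: "nat \<Rightarrow> bool"
    show "X \<in> cyl \<sigma> \<longleftrightarrow> X \<in> prod_emb UNIV ?M {..<length \<sigma>} (\<Pi>\<^sub>E i\<in>{..<length \<sigma>}. {\<sigma> ! i})"
      unfolding cyl_def by (simp add: prod_emb_def space_PiM PiE_iff) (simp add: Ball_def)
  qed
  then have "emeasure (bernoulli_measure c) (cyl \<sigma>) = (\<Prod>i<length \<sigma>. emeasure (?M i) {\<sigma> ! i})"
    unfolding bernoulli_measure_def
    by (simp only:) (rule emeasure_PiM_emb, auto intro: prob_space_measure_pmf)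
  also have "\<dots> = (\<Prod>i<length \<sigma>. ennreal (if \<sigma> ! i then 1 - c else c))"
    using assms by (intro prod.cong refl) (simp add: emeasure_pmf_single)
  also have "\<dots> = ennreal (wt c \<sigma>)"
    using assms by (simp add: wt_prod prod_ennreal)
  finally show ?thesis .
qed


lemma cyl_bits_disjoint: "disjoint_family_on (\<lambda>s. cyl (bits N s)) S" if "S \<subseteq> {..<2 ^ N}"
  using that cyl_bits_disj unfolding disjoint_family_on_def by blast

lemma xi_union:
  assumes "prob_space \<xi>" "sets \<xi> = sets cantor" "S \<subseteq> {..<2 ^ N}"
  shows "emeasure \<xi> (\<Union>s\<in>S. cyl (bits N s)) = ennreal (\<Sum>s\<in>S. measure \<xi> (cyl (bits N s)))"
proof -
  interpret prob_space \<xi> by fact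
  have fin: "finite S" using assms(3) finite_subset by blast
  have "emeasure \<xi> (\<Union>s\<in>S. cyl (bits N s)) = (\<Sum>s\<in>S. emeasure \<xi> (cyl (bits N s)))"
    using assms cyl_sets fin cyl_bits_disjoint by (intro sum_emeasure[symmetric]) auto
  also have "\<dots> = ennreal (\<Sum>s\<in>S. measure \<xi> (cyl (bits N s)))"
    by (simp add: emeasure_eq_measure sum_ennreal)
  finally show ?thesis .
qed

lemma xi_total:
  assumes "prob_space \<xi>" "sets \<xi> = sets cantor"
  shows "(\<Sum>s<2 ^ N. measure \<xi> (cyl (bits N s))) = 1"
proof -
  interpret prob_space \<xi> by fact
  have sp: "space \<xi> = UNIV" using sets_eq_imp_space_eq[OF assms(2)] unfolding cantor_def by (auto simp: space_PiM)
  have "(\<Union>s\<in>{..<2^N}. cyl (bits N s)) = UNIV" using cyl_bits_cover by blast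
  then have "emeasure \<xi> UNIV = ennreal (\<Sum>s<2 ^ N. measure \<xi> (cyl (bits N s)))"
    using xi_union[OF assms, of "{..<2^N}" N] by simp
  then have "ennreal (\<Sum>s<2 ^ N. measure \<xi> (cyl (bits N s))) = ennreal 1"
    using emeasure_space_1 sp by simp
  then show ?thesis by (subst (asm) ennreal_inj) (auto intro: sum_nonneg)
qed

lemma sumb_wt: fixes c :: real shows "(\<Sum>s<2 ^ N. wt c (bits N s)) = 1"
proof (induction N)
  case (Suc N) then show ?case by (simp only: sum_pow2_split[of "wt c"]) (simp add: sum.distrib flip: distrib_right sum_distrib_left)
qed simp

lemma sumb_wt_nz: fixes c :: real shows "(\<Sum>s<2 ^ N. wt c (bits N s) * nz (bits N s)) = N * c"
proof (induction N)
  case (Suc N)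
  have "(\<Sum>s<2 ^ Suc N. wt c (bits (Suc N) s) * nz (bits (Suc N) s))
     = (\<Sum>t<2 ^ N. c * wt c (bits N t) + (c * (wt c (bits N t) * nz (bits N t)) + (1 - c) * (wt c (bits N t) * nz (bits N t))))"
    by (simp only: sum_pow2_split[of "\<lambda>\<sigma>. wt c \<sigma> * nz \<sigma>"]) (simp add: algebra_simps)
  also have "\<dots> = c + N * c" using Suc sumb_wt[of c N]
    by (simp add: sum.distrib flip: sum_distrib_left) (simp add: algebra_simps)
  finally show ?case by (simp add: algebra_simps)
qed simp

lemma sumb_var: fixes c :: real shows "(\<Sum>s<2 ^ N. wt c (bits N s) * (nz (bits N s) - N * c)^2) = N * c * (1 - c)"
proof (induction N)
  case (Suc N)
  let ?w = "\<lambda>t. wt c (bits N t)" and ?z = "\<lambda>t. real (nz (bits N t)) - N * c"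
  have "(\<Sum>s<2 ^ Suc N. wt c (bits (Suc N) s) * (nz (bits (Suc N) s) - Suc N * c)^2)
     = (\<Sum>t<2 ^ N. c * ?w t * ((1 - c) + ?z t)^2 + (1 - c) * ?w t * (?z t - c)^2)"
    by (simp only: sum_pow2_split[of "\<lambda>\<sigma>. wt c \<sigma> * (nz \<sigma> - Suc N * c)^2"]) (simp add: algebra_simps)
  also have "\<dots> = (\<Sum>t<2 ^ N. c * (1 - c) * ?w t + 0 * (?w t * ?z t) + ?w t * (?z t)^2)"
    by (intro sum.cong refl) (simp add: power2_eq_square algebra_simps)
  also have "\<dots> = c * (1 - c) + N * c * (1 - c)"
  proof -
    have "(\<Sum>t<2 ^ N. ?w t * ?z t) = 0"
      using sumb_wt_nz[of c N] sumb_wt[of c N]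
      by (simp add: right_diff_distrib sum_subtractf flip: sum_distrib_right)
    then show ?thesis using Suc sumb_wt[of c N]
      by (simp add: sum.distrib flip: sum_distrib_left)
  qed
  finally show ?case by (simp add: algebra_simps)
qed simp

lemma wt_nonneg: "0 \<le> c \<Longrightarrow> c \<le> 1 \<Longrightarrow> 0 \<le> wt c \<sigma>"
  by (induction \<sigma>) auto

lemma chebyshev:
  fixes c d :: real
  assumes c: "0 \<le> c" "c \<le> 1" and d: "d > 0"
    and bad: "\<And>s. s \<in> S \<Longrightarrow> d \<le> \<bar>nz (bits N s) - N * c\<bar>" and S: "S \<subseteq> {..<2 ^ N}"
  shows "(\<Sum>s\<in>S. wt c (bits N s)) \<le> N / (4 * d^2)"
proof -
  have "(\<Sum>s\<in>S. wt c (bits N s)) \<le> (\<Sum>s\<in>S. wt c (bits N s) * (nz (bits N s) - N * c)^2 / d^2)"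
  proof (intro sum_mono)
    fix s assume "s \<in> S"
    then have "d^2 \<le> (nz (bits N s) - N * c)^2" using bad[of s] d
      using power_mono[of d "\<bar>nz (bits N s) - N * c\<bar>" 2] by simp
    then have "1 \<le> (nz (bits N s) - N * c)^2 / d^2" using d by simp
    then show "wt c (bits N s) \<le> wt c (bits N s) * (nz (bits N s) - N * c)^2 / d^2"
      using wt_nonneg[OF c, of "bits N s"] by (metis mult_left_mono mult.right_neutral times_divide_eq_right)
  qed
  also have "\<dots> \<le> (\<Sum>s<2^N. wt c (bits N s) * (nz (bits N s) - N * c)^2 / d^2)"
    using S wt_nonneg[OF c] by (intro sum_mono2) auto
  also have "\<dots> = N * c * (1 - c) / d^2" using sumb_var[of c N] by (simp flip: sum_divide_distrib)
  also have "\<dots> \<le> N / (4 * d^2)"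
  proof -
    have "0 \<le> (c - 1/2)^2" by simp
    then have "c * (1 - c) \<le> 1/4" by (simp add: power2_eq_square algebra_simps)
    then have "N * (c * (1 - c)) \<le> N * (1/4)" by (intro mult_left_mono) auto
    then have "N * c * (1 - c) / d^2 \<le> N * (1/4) / d^2" using d by (intro divide_right_mono) auto
    then show ?thesis by simp
  qed
  finally show ?thesis .
qed



lemma ee_0[simp]: "ee 0 = 0" and ee_Suc[simp]: "ee (Suc k) = ee k + k + 5"
  by (simp_all add: ee_def)

lemma ee_ge: "k \<le> ee k" by (induction k) simp_all

lemma PP_0[simp]: "PP a b 0 = 0" and PP_Suc: "PP a b (Suc k) = PP a b k * 2 ^ (k + 5) + am a b k (PP a b k)"
  by (simp_all add: PP_def)

lemma argmin_rec:
  fixes f :: "nat \<Rightarrow> nat"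
  shows "rec_nat 0 (\<lambda>i acc. if f (Suc i) < f acc then Suc i else acc) n \<le> n \<and>
    (\<forall>j\<le>n. f (rec_nat 0 (\<lambda>i acc. if f (Suc i) < f acc then Suc i else acc) n) \<le> f j)"
proof (induction n)
  case 0 then show ?case by simp
next
  case (Suc n)
  let ?g = "rec_nat 0 (\<lambda>i acc. if f (Suc i) < f acc then Suc i else acc) n"
  show ?case
  proof (cases "f (Suc n) < f ?g")
    case True
    then show ?thesis using Suc by (auto simp: le_Suc_eq)
  next
    case False
    then show ?thesis using Suc by (auto simp: le_Suc_eq)
  qed
qed

lemma am_props:
  shows "am a b k p < 2 ^ (k + 5)"
    and "j < 2 ^ (k + 5) \<Longrightarrow> AA a b k (p * 2 ^ (k + 5) + am a b k p) \<le> AA a b k (p * 2 ^ (k + 5) + j)"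
proof -
  have pos: "0 < (2::nat) ^ (k + 5)" by simp
  note r = argmin_rec[of "\<lambda>j. AA a b k (p * 2 ^ (k + 5) + j)" "2 ^ (k + 5) - 1"]
  show "am a b k p < 2 ^ (k + 5)" using r pos unfolding am_def by linarith
  assume "j < 2 ^ (k + 5)"
  then show "AA a b k (p * 2 ^ (k + 5) + am a b k p) \<le> AA a b k (p * 2 ^ (k + 5) + j)"
    using r unfolding am_def by auto
qed

definition Es :: "(nat \<Rightarrow> bool) measure \<Rightarrow> nat \<Rightarrow> nat \<Rightarrow> real" where
  "Es \<xi> k L = (\<Sum>s<2 ^ NN k. if good k L s then measure \<xi> (cyl (bits (NN k) s)) else 0)"

lemma Es_eq: "Es \<xi> k L = (\<Sum>s\<in>{s\<in>{..<2 ^ NN k}. good k L s}. measure \<xi> (cyl (bits (NN k) s)))"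
  unfolding Es_def by (subst sum.inter_filter) auto

lemma NN_pos: "0 < NN k" by (simp add: NN_def)

lemma qv_approx:
  assumes ap: "\<bar>x - rat_approx A B\<bar> \<le> 1 / 2 ^ n" and x: "0 \<le> x"
  shows "\<bar>x - real (if even A then A div 2 * 2 ^ n div (B + 1) else 0) / 2 ^ n\<bar> \<le> 2 / 2 ^ n"
proof -
  define P where "P = (if even A then A div 2 else 0)"
  have mr: "max 0 (rat_approx A B) = real P / real (B + 1)"
  proof (cases "even A")
    case True
    then have "int_decode A = int (A div 2)" by (simp add: int_decode_def sum_decode_def)
    then show ?thesis using True by (simp add: rat_approx_def P_def)
  next
    case False
    then have "int_decode A < 0" by (simp add: int_decode_def sum_decode_def)
    then have "rat_approx A B \<le> 0" unfolding rat_approx_def by (simp add: divide_nonpos_pos)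
    then show ?thesis using False by (simp add: P_def)
  qed
  have q: "(if even A then A div 2 * 2 ^ n div (B + 1) else 0) = P * 2 ^ n div (B + 1)"
    by (simp add: P_def)
  define q where "q = P * 2 ^ n div (B + 1)"
  have d: "P * 2 ^ n = q * (B + 1) + P * 2 ^ n mod (B + 1)" unfolding q_def by (rule div_mult_mod_eq[symmetric])
  have m: "P * 2 ^ n mod (B + 1) < B + 1" by simp
  have r1: "real q * (B + 1) \<le> real P * 2 ^ n"
  proof -
    have "q * (B + 1) \<le> P * 2 ^ n" by (subst d) (rule le_add1)
    then have "real (q * (B + 1)) \<le> real (P * 2 ^ n)" by (simp only: of_nat_le_iff)
    then show ?thesis by (simp add: algebra_simps)
  qed
  have r2: "real P * 2 ^ n < (real q + 1) * (B + 1)"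
  proof -
    have "P * 2 ^ n < q * (B + 1) + (B + 1)" using d m by linarith
    also have "q * (B + 1) + (B + 1) = (q + 1) * (B + 1)" by (simp add: algebra_simps)
    finally have "P * 2 ^ n < (q + 1) * (B + 1)" .
    then have "real (P * 2 ^ n) < real ((q + 1) * (B + 1))" by (simp only: of_nat_less_iff)
    then show ?thesis by (simp add: algebra_simps)
  qed
  have B: "(0::real) < B + 1" by simp
  have u1: "real q / 2 ^ n \<le> real P / (B + 1)" using r1 B by (simp add: field_simps)
  have u2: "real P / (B + 1) < real q / 2 ^ n + 1 / 2 ^ n" using r2 B by (simp add: field_simps)
  have "\<bar>x - max 0 (rat_approx A B)\<bar> \<le> 1 / 2 ^ n" using ap x by (cases "0 \<le> rat_approx A B") (auto simp: abs_le_iff max_def)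
  then show ?thesis unfolding q q_def[symmetric] using mr u1 u2 by (simp add: abs_le_iff)
qed



lemma AA_approx:
  assumes xi: "prob_space \<xi>" "sets \<xi> = sets cantor"
    and ap: "\<forall>\<sigma> n. \<bar>measure \<xi> (cyl \<sigma>) - rat_approx (a (code \<sigma>) n) (b (code \<sigma>) n)\<bar> \<le> 1 / 2 ^ n"
  shows "\<bar>Es \<xi> k L - real (AA a b k L) / 2 ^ pr k\<bar> \<le> (1/2) ^ (k + 7)"
proof -
  let ?N = "NN k" and ?n = "pr k"
  have e: "real (AA a b k L) / 2 ^ ?n = (\<Sum>s<2 ^ ?N. if good k L s then real (qv a b (code (bits ?N s)) ?n) / 2 ^ ?n else 0)"
    by (simp only: AA_def cr_code of_nat_sum sum_divide_distrib) (intro sum.cong refl, simp)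
  have "\<bar>Es \<xi> k L - real (AA a b k L) / 2 ^ ?n\<bar>
      = \<bar>\<Sum>s<2 ^ ?N. (if good k L s then measure \<xi> (cyl (bits ?N s)) - real (qv a b (code (bits ?N s)) ?n) / 2 ^ ?n else 0)\<bar>"
    unfolding e Es_def by (simp add: sum_subtractf[symmetric] if_distrib) (intro arg_cong[where f=abs] sum.cong refl; simp)
  also have "\<dots> \<le> (\<Sum>s<2 ^ ?N. \<bar>if good k L s then measure \<xi> (cyl (bits ?N s)) - real (qv a b (code (bits ?N s)) ?n) / 2 ^ ?n else 0\<bar>)"
    by (rule sum_abs)
  also have "\<dots> \<le> (\<Sum>s<(2::nat) ^ ?N. 2 / 2 ^ ?n :: real)"
  proof (intro sum_mono)
    fix s
    have "\<bar>measure \<xi> (cyl (bits ?N s)) - real (qv a b (code (bits ?N s)) ?n) / 2 ^ ?n\<bar> \<le> 2 / 2 ^ ?n"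
      unfolding qv_def by (rule qv_approx) (use ap in auto)
    then show "\<bar>if good k L s then measure \<xi> (cyl (bits ?N s)) - real (qv a b (code (bits ?N s)) ?n) / 2 ^ ?n else 0\<bar> \<le> 2 / 2 ^ ?n"
      by auto
  qed
  also have "\<dots> = 2 ^ ?N * 2 / 2 ^ ?n" by simp
  also have "\<dots> = (1/2) ^ (k + 7)"
    unfolding pr_def by (simp add: power_add field_simps)
  finally show ?thesis .
qed

lemma good_overlap: "card {j. j < M \<and> good k (p * M + j) s} \<le> 4"
proof (cases "{j. j < M \<and> good k (p * M + j) s} = {}")
  case True then show ?thesis by (subst True) simp
next
  case False
  let ?T = "{j. j < M \<and> good k (p * M + j) s}"
  have fin: "finite ?T" by simp
  define j0 where "j0 = Min ?T"
  have j0T: "j0 \<in> ?T" unfolding j0_def by (rule Min_in[OF fin False])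
  have "?T \<subseteq> {j0..j0 + 3}"
  proof
    fix j assume jT: "j \<in> ?T"
    have "j0 \<le> j" unfolding j0_def using jT fin by simp
    moreover have "j \<le> j0 + 3"
    proof -
      let ?Z = "zc (NN k) s * 2 ^ ee (Suc k)"
      have "(p * M + j) * NN k \<le> ?Z + NN k" using jT unfolding good_def by simp
      also have "?Z \<le> (p * M + j0 + 2) * NN k" using j0T unfolding good_def by simp
      finally have "(p * M + j) * NN k \<le> (p * M + j0 + 3) * NN k" by (simp add: algebra_simps)
      then show ?thesis using NN_pos[of k] by simp
    qed
    ultimately show "j \<in> {j0..j0 + 3}" by simp
  qed
  then have "card ?T \<le> card {j0..j0 + 3}" by (intro card_mono) auto
  then show ?thesis by simp
qed

lemma Es_sum_le:
  assumes xi: "prob_space \<xi>" "sets \<xi> = sets cantor"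
  shows "(\<Sum>j<M. Es \<xi> k (p * M + j)) \<le> 4"
proof -
  let ?N = "NN k" let ?m = "\<lambda>s. measure \<xi> (cyl (bits ?N s))"
  have "(\<Sum>j<M. Es \<xi> k (p * M + j)) = (\<Sum>s<2 ^ ?N. \<Sum>j<M. if good k (p * M + j) s then ?m s else 0)"
    unfolding Es_def by (rule sum.swap)
  also have "\<dots> = (\<Sum>s<2 ^ ?N. real (card {j. j < M \<and> good k (p * M + j) s}) * ?m s)"
  proof (intro sum.cong refl)
    fix s
    have "(\<Sum>j<M. if good k (p * M + j) s then ?m s else 0) = (\<Sum>j\<in>{j\<in>{..<M}. good k (p * M + j) s}. ?m s)"
      by (subst sum.inter_filter) auto
    also have "{j\<in>{..<M}. good k (p * M + j) s} = {j. j < M \<and> good k (p * M + j) s}" by auto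
    finally show "(\<Sum>j<M. if good k (p * M + j) s then ?m s else 0) = real (card {j. j < M \<and> good k (p * M + j) s}) * ?m s"
      by simp
  qed
  also have "\<dots> \<le> (\<Sum>s<2 ^ ?N. 4 * ?m s)"
    by (intro sum_mono mult_right_mono) (use good_overlap in auto)
  also have "\<dots> = 4" using xi_total[OF xi, of ?N] by (simp flip: sum_distrib_left)
  finally show ?thesis .
qed

lemma stage_bound:
  assumes xi: "prob_space \<xi>" "sets \<xi> = sets cantor"
    and ap: "\<forall>\<sigma> n. \<bar>measure \<xi> (cyl \<sigma>) - rat_approx (a (code \<sigma>) n) (b (code \<sigma>) n)\<bar> \<le> 1 / 2 ^ n"
  shows "Es \<xi> k (PP a b (Suc k)) \<le> (1/2) ^ (k + 2)"
proof -
  define M :: nat where "M = 2 ^ (k + 5)"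
  define p where "p = PP a b k"
  define js where "js = am a b k p"
  define A where "A j = real (AA a b k (p * M + j)) / 2 ^ pr k" for j
  define E where "E j = Es \<xi> k (p * M + j)" for j
  define d :: real where "d = (1/2) ^ (k + 7)"
  have PPS: "PP a b (Suc k) = p * M + js" unfolding p_def M_def js_def by (simp add: PP_Suc)
  have err: "\<bar>E j - A j\<bar> \<le> d" for j unfolding E_def A_def d_def by (rule AA_approx[OF xi ap])
  have min: "A js \<le> A j" if "j < M" for j
    using am_props(2)[of j k a b p] that unfolding A_def js_def M_def by (simp add: divide_right_mono)
  have Mpos: "(0::real) < M" unfolding M_def by simp
  have "real M * A js = (\<Sum>j<M. A js)" by simp
  also have "\<dots> \<le> (\<Sum>j<M. A j)" by (intro sum_mono min) simp
  also have "\<dots> \<le> (\<Sum>j<M. E j + d)"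
  proof (intro sum_mono)
    fix j show "A j \<le> E j + d" using err[of j] by (simp add: abs_le_iff)
  qed
  also have "\<dots> = (\<Sum>j<M. E j) + M * d" by (simp add: sum.distrib)
  also have "\<dots> \<le> 4 + M * d" using Es_sum_le[OF xi, where M=M and k=k and p=p] unfolding E_def by simp
  finally have "M * A js \<le> 4 + M * d" .
  then have "A js \<le> 4 / M + d" using Mpos by (simp add: field_simps)
  then have "E js \<le> 4 / M + 2 * d" using err[of js] by (simp add: abs_le_iff)
  also have "\<dots> \<le> (1/2) ^ (k + 2)" unfolding M_def d_def by (simp add: power_add field_simps)
  finally show ?thesis unfolding E_def PPS .
qed



definition lo :: "(nat \<Rightarrow> nat \<Rightarrow> nat) \<Rightarrow> (nat \<Rightarrow> nat \<Rightarrow> nat) \<Rightarrow> nat \<Rightarrow> real" where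
  "lo a b k = real (PP a b k) / 2 ^ ee k"
definition hi :: "(nat \<Rightarrow> nat \<Rightarrow> nat) \<Rightarrow> (nat \<Rightarrow> nat \<Rightarrow> nat) \<Rightarrow> nat \<Rightarrow> real" where
  "hi a b k = (real (PP a b k) + 1) / 2 ^ ee k"

lemma lo_Suc: "lo a b k \<le> lo a b (Suc k)"
proof -
  have "real (PP a b k) * 2 ^ (k + 5) \<le> real (PP a b (Suc k))" by (simp add: PP_Suc)
  then show ?thesis unfolding lo_def by (simp add: power_add field_simps)
qed

lemma hi_Suc: "hi a b (Suc k) \<le> hi a b k"
proof -
  have "am a b k (PP a b k) + 1 \<le> 2 ^ (k + 5)" using am_props(1)[of a b k] by (simp add: Suc_le_eq)
  then have "PP a b (Suc k) + 1 \<le> (PP a b k + 1) * 2 ^ (k + 5)"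
    by (simp add: PP_Suc algebra_simps)
  then have "real (PP a b (Suc k) + 1) \<le> real ((PP a b k + 1) * 2 ^ (k + 5))" by (simp only: of_nat_le_iff)
  then have "real (PP a b (Suc k)) + 1 \<le> (real (PP a b k) + 1) * 2 ^ (k + 5)" by (simp add: algebra_simps)
  define T :: real where "T = 2 ^ (k + 5)"
  have T: "0 < T" unfolding T_def by simp
  have e: "(2::real) ^ ee (Suc k) = 2 ^ ee k * T" unfolding T_def
    by (simp only: ee_Suc add.assoc power_add)
  have "hi a b (Suc k) = (real (PP a b (Suc k)) + 1) / (2 ^ ee k * T)" unfolding hi_def e ..
  also have "\<dots> \<le> ((real (PP a b k) + 1) * T) / (2 ^ ee k * T)"
    by (rule divide_right_mono) (use \<open>real (PP a b (Suc k)) + 1 \<le> _\<close> in \<open>simp_all add: T_def\<close>)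
  also have "\<dots> = hi a b k" unfolding hi_def using T by simp
  finally show ?thesis .
qed

lemma lo_mono: "k \<le> m \<Longrightarrow> lo a b k \<le> lo a b m"
  by (induction m rule: dec_induct) (auto intro: order.trans lo_Suc)

lemma hi_mono: "k \<le> m \<Longrightarrow> hi a b m \<le> hi a b k"
  by (induction m rule: dec_induct) (auto intro: order.trans hi_Suc)

lemma lo_hi: "lo a b k \<le> hi a b m"
proof -
  have "lo a b k \<le> lo a b (max k m)" by (rule lo_mono) simp
  also have "\<dots> \<le> hi a b (max k m)" unfolding lo_def hi_def by (simp add: divide_right_mono)
  also have "\<dots> \<le> hi a b m" by (rule hi_mono) simp
  finally show ?thesis .
qed

definition cc :: "(nat \<Rightarrow> nat \<Rightarrow> nat) \<Rightarrow> (nat \<Rightarrow> nat \<Rightarrow> nat) \<Rightarrow> real" where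
  "cc a b = (SUP k. lo a b k)"

lemma cc_bounds: "lo a b k \<le> cc a b" "cc a b \<le> hi a b k"
proof -
  have bdd: "bdd_above (range (lo a b))" by (intro bdd_aboveI2[where M="hi a b 0"]) (rule lo_hi)
  show "lo a b k \<le> cc a b" unfolding cc_def by (rule cSUP_upper[OF _ bdd]) simp
  show "cc a b \<le> hi a b k" unfolding cc_def by (rule cSUP_least) (auto intro: lo_hi)
qed

lemma cc_01: "0 \<le> cc a b" "cc a b \<le> 1"
  using cc_bounds[of a b 0] by (auto simp: lo_def hi_def)

lemma int_decode_even: "int_decode (2 * p) = int p"
  by (simp add: int_decode_def sum_decode_def)

lemma cc_computable:
  assumes "computable2 a" "computable2 b"
  shows "computable_real (cc a b)"
  unfolding computable_real_def
proof (intro exI conjI allI)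
  show "computable1 (\<lambda>n. 2 * PP a b n)" by (rule comp_PP[OF assms])
  show "computable1 (\<lambda>n. 2 ^ ee n - 1)" by (rule comp_ee)
  fix n
  have r: "rat_approx (2 * PP a b n) (2 ^ ee n - 1) = lo a b n"
    unfolding rat_approx_def lo_def int_decode_even by simp
  have "\<bar>cc a b - lo a b n\<bar> \<le> hi a b n - lo a b n" using cc_bounds[of a b n] by simp
  also have "\<dots> = 1 / 2 ^ ee n" unfolding hi_def lo_def by (simp add: field_simps)
  also have "\<dots> \<le> 1 / 2 ^ n" using ee_ge[of n] by (intro divide_left_mono power_increasing) auto
  finally show "\<bar>cc a b - rat_approx (2 * PP a b n) (2 ^ ee n - 1)\<bar> \<le> 1 / 2 ^ n" unfolding r .
qed

definition Eb :: "real \<Rightarrow> nat \<Rightarrow> nat \<Rightarrow> real" where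
  "Eb c k L = (\<Sum>s\<in>{s\<in>{..<2 ^ NN k}. \<not> good k L s}. wt c (bits (NN k) s))"

lemma bad_far:
  fixes c :: real
  assumes L: "real L / 2 ^ ee (Suc k) \<le> c" "c \<le> (real L + 1) / 2 ^ ee (Suc k)"
    and bad: "\<not> good k L s"
  shows "real (NN k) / 2 ^ ee (Suc k) \<le> \<bar>nz (bits (NN k) s) - NN k * c\<bar>"
proof -
  define N where "N = NN k" define e where "e = ee (Suc k)" define Z where "Z = zc N s"
  have Zn: "nz (bits N s) = Z" unfolding Z_def zc_bits ..
  have w: "(0::real) < 2 ^ e" by simp
  from bad consider "Z * 2 ^ e + N < L * N" | "(L + 2) * N < Z * 2 ^ e"
    unfolding good_def N_def[symmetric] e_def[symmetric] Z_def[symmetric] by linarith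
  then show ?thesis
  proof cases
    case 1
    then have "real (Z * 2 ^ e + N) < real (L * N)" by (simp only: of_nat_less_iff)
    then have "real Z * 2 ^ e + N < real L * N" by simp
    then have "(real Z * 2 ^ e + N) / 2 ^ e < real L * N / 2 ^ e" using w by (rule divide_strict_right_mono)
    then have "real Z + N / 2 ^ e < real L * N / 2 ^ e" using w by (simp add: add_divide_distrib)
    also have "\<dots> \<le> N * c"
    proof -
      have "(real L / 2 ^ e) * N \<le> c * N" using L(1) unfolding e_def[symmetric] by (rule mult_right_mono) simp
      then show ?thesis by (simp add: mult.commute)
    qed
    finally show ?thesis unfolding Zn N_def[symmetric] e_def[symmetric] by simp
  next
    case 2
    then have "real ((L + 2) * N) < real (Z * 2 ^ e)" by (simp only: of_nat_less_iff)
    then have "(real L + 2) * N < real Z * 2 ^ e" by (simp add: algebra_simps)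
    then have "(real L + 2) * N / 2 ^ e < real Z * 2 ^ e / 2 ^ e" using w by (rule divide_strict_right_mono)
    then have "(real L + 2) * N / 2 ^ e < real Z" using w by simp
    moreover have "N * c \<le> (real L + 1) * N / 2 ^ e"
    proof -
      have "c * N \<le> ((real L + 1) / 2 ^ e) * N" using L(2) unfolding e_def[symmetric] by (rule mult_right_mono) simp
      then show ?thesis by (simp add: mult.commute)
    qed
    ultimately have "N * c + N / 2 ^ e < real Z" by (simp add: field_simps)
    then show ?thesis unfolding Zn N_def[symmetric] e_def[symmetric] by simp
  qed
qed

lemma pow_aux: "real ((2::nat) ^ (2 * e + k + 3)) / (4 * (real ((2::nat) ^ (2 * e + k + 3)) / 2 ^ e)^2) = (1/2) ^ (k + 5)"
proof -
  define x :: real where "x = 2 ^ e"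
  define y :: real where "y = 2 ^ k"
  have x: "0 < x" "0 < y" unfolding x_def y_def by simp_all
  have ex: "2 * e + k + 3 = e + (e + (k + 3))" by simp
  have "real ((2::nat) ^ (2 * e + k + 3)) = (2::real) ^ (e + (e + (k + 3)))" by (simp only: ex of_nat_power of_nat_numeral)
  also have "\<dots> = x * (x * (y * 2 ^ 3))" unfolding x_def y_def by (simp only: power_add)
  finally have N: "real ((2::nat) ^ (2 * e + k + 3)) = x * x * y * 8" by simp
  have h: "(1/2::real) ^ (k + 5) = 1 / (y * 32)" unfolding y_def by (simp add: power_add power_one_over)
  have xe: "(2::real) ^ e = x" unfolding x_def ..
  show ?thesis unfolding N h xe using x by (simp add: power2_eq_square field_simps)
qed

lemma Eb_bound:
  fixes c :: real
  assumes c: "0 \<le> c" "c \<le> 1"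
    and L: "real L / 2 ^ ee (Suc k) \<le> c" "c \<le> (real L + 1) / 2 ^ ee (Suc k)"
  shows "Eb c k L \<le> (1/2) ^ (k + 5)"
proof -
  define d where "d = real (NN k) / 2 ^ ee (Suc k)"
  have d: "0 < d" unfolding d_def using NN_pos[of k] by simp
  have "Eb c k L \<le> NN k / (4 * d^2)" unfolding Eb_def
    by (rule chebyshev[OF c d]) (use bad_far[OF L] in \<open>auto simp: d_def\<close>)
  also have "\<dots> = (1/2) ^ (k + 5)"
    unfolding d_def NN_def ee_Suc[symmetric] by (rule pow_aux)
  finally show ?thesis .
qed



lemma tail_bound:
  assumes sets: "\<And>k. A k \<in> sets M" and le: "\<And>k. m \<le> k \<Longrightarrow> emeasure M (A k) \<le> ennreal ((1/2) ^ (k + 1))"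
  shows "emeasure M (\<Union>k\<in>{m..}. A k) \<le> ennreal (1 / 2 ^ m)"
proof -
  have U: "(\<Union>k\<in>{m..}. A k) = (\<Union>i. A (i + m))"
  proof (intro set_eqI iffI)
    fix x assume "x \<in> (\<Union>k\<in>{m..}. A k)"
    then obtain k where "m \<le> k" "x \<in> A k" by auto
    then have "x \<in> A ((k - m) + m)" by simp
    then show "x \<in> (\<Union>i. A (i + m))" by blast
  next
    fix x assume "x \<in> (\<Union>i. A (i + m))"
    then obtain i where "x \<in> A (i + m)" by auto
    then show "x \<in> (\<Union>k\<in>{m..}. A k)" by (intro UN_I[of "i + m"]) auto
  qed
  have "emeasure M (\<Union>i. A (i + m)) \<le> (\<Sum>i. emeasure M (A (i + m)))"
    by (rule emeasure_subadditive_countably) (use sets in auto)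
  also have "\<dots> \<le> (\<Sum>i. ennreal ((1/2) ^ (i + m + 1)))"
    by (intro suminf_le summableI le) auto
  also have "\<dots> = ennreal (\<Sum>i. (1/2) ^ (i + m + 1))"
  proof (rule suminf_ennreal2)
    show "summable (\<lambda>i. (1/2::real) ^ (i + m + 1))"
      by (simp add: power_add summable_mult2)
  qed simp
  also have "(\<Sum>i. (1/2::real) ^ (i + m + 1)) = 1 / 2 ^ m"
  proof -
    have "(\<lambda>i. (1/2::real) ^ (i + m + 1)) = (\<lambda>i. (1/2) ^ (m + 1) * (1/2) ^ i)"
      by (simp add: power_add mult.commute)
    moreover have "(\<lambda>i. (1/2::real) ^ (m + 1) * (1/2) ^ i) sums ((1/2) ^ (m + 1) * (1 / (1 - 1/2)))"
      by (intro sums_mult geometric_sums) simp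
    ultimately have "(\<lambda>i. (1/2::real) ^ (i + m + 1)) sums (1 / 2 ^ m)"
      by (simp add: power_one_over)
    then show ?thesis by (rule sums_unique[symmetric])
  qed
  finally show ?thesis unfolding U .
qed

lemma Wx_mem: "prod_encode (m, code \<sigma>) \<in> Wx a b \<longleftrightarrow>
   (\<exists>k s. m \<le> k \<and> s < 2 ^ NN k \<and> good k (PP a b (Suc k)) s \<and> \<sigma> = bits (NN k) s)"
proof
  assume "prod_encode (m, code \<sigma>) \<in> Wx a b"
  then obtain m' k s where "prod_encode (m, code \<sigma>) = prod_encode (m', cr (NN k) s)" "m' \<le> k" "s < 2 ^ NN k"
      "good k (PP a b (Suc k)) s"
    unfolding Wx_def by blast
  then show "\<exists>k s. m \<le> k \<and> s < 2 ^ NN k \<and> good k (PP a b (Suc k)) s \<and> \<sigma> = bits (NN k) s"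
    by (auto simp: prod_encode_eq cr_code dest: code_inj)
next
  assume "\<exists>k s. m \<le> k \<and> s < 2 ^ NN k \<and> good k (PP a b (Suc k)) s \<and> \<sigma> = bits (NN k) s"
  then obtain k s where ks: "m \<le> k" "s < 2 ^ NN k" "good k (PP a b (Suc k)) s" "\<sigma> = bits (NN k) s" by blast
  show "prod_encode (m, code \<sigma>) \<in> Wx a b" unfolding Wx_def
    apply (rule CollectI, rule exI[of _ "m + k + s"])
    apply (rule exI[of _ m], rule conjI, simp)
    apply (rule exI[of _ k], rule conjI, simp)
    apply (rule exI[of _ s], rule conjI, simp)
    using ks by (simp add: cr_code)
qed

lemma Wc_mem: "prod_encode (m, code \<sigma>) \<in> Wc a b \<longleftrightarrow>
   (\<exists>k s. m \<le> k \<and> s < 2 ^ NN k \<and> \<not> good k (PP a b (Suc k)) s \<and> \<sigma> = bits (NN k) s)"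
proof
  assume "prod_encode (m, code \<sigma>) \<in> Wc a b"
  then obtain m' k s where "prod_encode (m, code \<sigma>) = prod_encode (m', cr (NN k) s)" "m' \<le> k" "s < 2 ^ NN k"
      "\<not> good k (PP a b (Suc k)) s"
    unfolding Wc_def by blast
  then show "\<exists>k s. m \<le> k \<and> s < 2 ^ NN k \<and> \<not> good k (PP a b (Suc k)) s \<and> \<sigma> = bits (NN k) s"
    by (auto simp: prod_encode_eq cr_code dest: code_inj)
next
  assume "\<exists>k s. m \<le> k \<and> s < 2 ^ NN k \<and> \<not> good k (PP a b (Suc k)) s \<and> \<sigma> = bits (NN k) s"
  then obtain k s where ks: "m \<le> k" "s < 2 ^ NN k" "\<not> good k (PP a b (Suc k)) s" "\<sigma> = bits (NN k) s" by blast
  show "prod_encode (m, code \<sigma>) \<in> Wc a b" unfolding Wc_def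
    apply (rule CollectI, rule exI[of _ "m + k + s"])
    apply (rule exI[of _ m], rule conjI, simp)
    apply (rule exI[of _ k], rule conjI, simp)
    apply (rule exI[of _ s], rule conjI, simp)
    using ks by (simp add: cr_code)
qed

lemma tl_Wx: "test_level (Wx a b) m = (\<Union>k\<in>{m..}. \<Union>s\<in>{s\<in>{..<2 ^ NN k}. good k (PP a b (Suc k)) s}. cyl (bits (NN k) s))"
  unfolding test_level_def using Wx_mem[of m _ a b] by auto

lemma tl_Wc: "test_level (Wc a b) m = (\<Union>k\<in>{m..}. \<Union>s\<in>{s\<in>{..<2 ^ NN k}. \<not> good k (PP a b (Suc k)) s}. cyl (bits (NN k) s))"
  unfolding test_level_def using Wc_mem[of m _ a b] by auto

lemma finite_cyl_sets: "(\<Union>s\<in>S. cyl (bits N s)) \<in> sets cantor" if "finite S"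
  using that cyl_sets by (intro sets.finite_UN) auto



lemma half_pow_mono: "(1/2::real) ^ (k + j) \<le> (1/2) ^ (k + 1)" if "1 \<le> j"
  using that by (intro power_decreasing) auto

lemma mlt_xi:
  assumes xi: "prob_space \<xi>" "sets \<xi> = sets cantor" and ca: "computable2 a" and cb: "computable2 b"
    and ap: "\<forall>\<sigma> n. \<bar>measure \<xi> (cyl \<sigma>) - rat_approx (a (code \<sigma>) n) (b (code \<sigma>) n)\<bar> \<le> 1 / 2 ^ n"
  shows "martin_loef_test \<xi> (Wx a b)"
  unfolding martin_loef_test_def
proof (intro conjI allI)
  show "ce_set (Wx a b)" by (rule ce_Wx[OF ca cb])
  fix n
  show "emeasure \<xi> (test_level (Wx a b) n) \<le> ennreal (1 / 2 ^ n)"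
    unfolding tl_Wx
  proof (rule tail_bound)
    fix k
    show "(\<Union>s\<in>{s \<in> {..<2 ^ NN k}. good k (PP a b (Suc k)) s}. cyl (bits (NN k) s)) \<in> sets \<xi>"
      unfolding xi(2) by (rule finite_cyl_sets) simp
    have "emeasure \<xi> (\<Union>s\<in>{s \<in> {..<2 ^ NN k}. good k (PP a b (Suc k)) s}. cyl (bits (NN k) s))
        = ennreal (Es \<xi> k (PP a b (Suc k)))"
      unfolding Es_eq by (rule xi_union[OF xi]) auto
    also have "\<dots> \<le> ennreal ((1/2) ^ (k + 1))"
      using stage_bound[OF xi ap, of k] half_pow_mono[of 2 k] by (intro ennreal_leI) linarith
    finally show "emeasure \<xi> (\<Union>s\<in>{s \<in> {..<2 ^ NN k}. good k (PP a b (Suc k)) s}. cyl (bits (NN k) s))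
        \<le> ennreal ((1/2) ^ (k + 1))" .
  qed
qed

lemma mlt_c:
  assumes ca: "computable2 a" and cb: "computable2 b"
  shows "martin_loef_test (bernoulli_measure (cc a b)) (Wc a b)"
  unfolding martin_loef_test_def
proof (intro conjI allI)
  show "ce_set (Wc a b)" by (rule ce_Wc[OF ca cb])
  fix n
  let ?c = "cc a b"
  show "emeasure (bernoulli_measure ?c) (test_level (Wc a b) n) \<le> ennreal (1 / 2 ^ n)"
    unfolding tl_Wc
  proof (rule tail_bound)
    fix k
    let ?S = "{s \<in> {..<2 ^ NN k}. \<not> good k (PP a b (Suc k)) s}"
    show "(\<Union>s\<in>?S. cyl (bits (NN k) s)) \<in> sets (bernoulli_measure ?c)"
      unfolding sets_bern by (rule finite_cyl_sets) simp
    have "emeasure (bernoulli_measure ?c) (\<Union>s\<in>?S. cyl (bits (NN k) s))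
        = (\<Sum>s\<in>?S. emeasure (bernoulli_measure ?c) (cyl (bits (NN k) s)))"
      by (rule sum_emeasure[symmetric]) (auto simp: sets_bern cyl_sets intro: cyl_bits_disjoint)
    also have "\<dots> = (\<Sum>s\<in>?S. ennreal (wt ?c (bits (NN k) s)))"
      using cc_01 by (intro sum.cong refl emeasure_bern_cyl) auto
    also have "\<dots> = ennreal (Eb ?c k (PP a b (Suc k)))"
      unfolding Eb_def using cc_01 by (intro sum_ennreal) (auto intro: wt_nonneg)
    also have "\<dots> \<le> ennreal ((1/2) ^ (k + 1))"
    proof (intro ennreal_leI order.trans[OF Eb_bound])
      show "real (PP a b (Suc k)) / 2 ^ ee (Suc k) \<le> ?c" using cc_bounds(1)[of a b "Suc k"] by (simp add: lo_def)
      show "?c \<le> (real (PP a b (Suc k)) + 1) / 2 ^ ee (Suc k)" using cc_bounds(2)[of a b "Suc k"] by (simp add: hi_def)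
      show "(1/2::real) ^ (k + 5) \<le> (1/2) ^ (k + 1)" by (rule half_pow_mono) simp
    qed (use cc_01 in auto)
    finally show "emeasure (bernoulli_measure ?c) (\<Union>s\<in>?S. cyl (bits (NN k) s)) \<le> ennreal ((1/2) ^ (k + 1))" .
  qed
qed

theorem mainTheorem7:
  shows "\<not> (\<exists>\<xi> :: (nat \<Rightarrow> bool) measure.
            prob_space \<xi> \<and> sets \<xi> = sets cantor \<and> computable_measure \<xi> \<and>
            (\<forall>c :: real. 0 \<le> c \<and> c \<le> 1 \<and> computable_real c \<longrightarrow>
               MLR \<xi> \<inter> MLR (bernoulli_measure c) \<noteq> {}))"
proof
  assume "\<exists>\<xi> :: (nat \<Rightarrow> bool) measure.
            prob_space \<xi> \<and> sets \<xi> = sets cantor \<and> computable_measure \<xi> \<and>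
            (\<forall>c :: real. 0 \<le> c \<and> c \<le> 1 \<and> computable_real c \<longrightarrow>
               MLR \<xi> \<inter> MLR (bernoulli_measure c) \<noteq> {})"
  then obtain \<xi> :: "(nat \<Rightarrow> bool) measure" where xi: "prob_space \<xi>" "sets \<xi> = sets cantor"
    and cm: "computable_measure \<xi>"
    and all: "\<And>c :: real. 0 \<le> c \<Longrightarrow> c \<le> 1 \<Longrightarrow> computable_real c \<Longrightarrow> MLR \<xi> \<inter> MLR (bernoulli_measure c) \<noteq> {}"
    by blast
  obtain a b where ca: "computable2 a" and cb: "computable2 b"
    and ap: "\<forall>\<sigma> n. \<bar>measure \<xi> (cyl \<sigma>) - rat_approx (a (code \<sigma>) n) (b (code \<sigma>) n)\<bar> \<le> 1 / 2 ^ n"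
    using cm unfolding computable_measure_def by blast
  let ?c = "cc a b"
  obtain X where X1: "X \<in> MLR \<xi>" and X2: "X \<in> MLR (bernoulli_measure ?c)"
    using all[OF cc_01 cc_computable[OF ca cb]] by blast
  have "X \<notin> (\<Inter>n. test_level (Wc a b) n)" using X2 mlt_c[OF ca cb] unfolding MLR_def by blast
  then obtain m where m: "X \<notin> test_level (Wc a b) m" by blast
  have "X \<in> test_level (Wx a b) m'" for m'
  proof -
    define k where "k = max m m'"
    obtain s where s: "s < 2 ^ NN k" "X \<in> cyl (bits (NN k) s)" using cyl_bits_cover by blast
    have "good k (PP a b (Suc k)) s"
    proof (rule ccontr)
      assume "\<not> good k (PP a b (Suc k)) s"
      then have "X \<in> test_level (Wc a b) m" unfolding tl_Wc using s by (auto simp: k_def)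
      then show False using m by blast
    qed
    then show ?thesis unfolding tl_Wx using s by (auto simp: k_def)
  qed
  then have "X \<in> (\<Inter>n. test_level (Wx a b) n)" by blast
  then show False using X1 mlt_xi[OF xi ca cb ap] unfolding MLR_def by blast
qed


end
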